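(* Fix an iteration $k$, a current policy $\pi_k$, and a function $M_k:\mathcal Q\to(0,\infty)$. Define \[ L^{\mathrm{Nat}}_{\pi_k}(\pi(\cdot\mid q))=\mathbb E_{o\sim\pi(\cdot\mid q)}\Bigl[\frac{r^*(q,o)-\mathbb E_{o'\sim\pi_k(\cdot\mid q)}[r^*(q,o')]}{M_k(q)}\Bigr]. \] Then for every policy $\pi$, \[ \mathbb{E}_{q\sim\rho_{\mathcal Q}}\bigl[p_{\pi}(q)-p_{\pi_k}(q)\bigr] \ge \mathbb{E}_{q\sim\rho_{\mathcal Q}}\bigl[L^{\mathrm{Nat}}_{\pi_k}(\pi(\cdot\mid q))\bigr] -2\sqrt{\mathbb{E}_{q\sim\rho_{\mathcal Q}}\Bigl(\tfrac{1-M_k(q)}{M_k(q)}\Bigr)^2}\; \sqrt{\mathbb{E}_{q\sim\rho_{\mathcal Q}}\mathrm{TV}^2\bigl(\pi(\cdot\mid q)\,\|\,\pi_k(\cdot\mid q)\bigr)}. \]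
   Context: Setting: $\mathcal Q$ is a set of prompts with a probability distribution $\rho_{\mathcal Q}$; $\mathcal O$ is a countable set of responses; $r^*:\mathcal Q\times\mathcal O\to\{0,1\}$ is the true binary reward. A policy $\pi$ assigns to each $q$ a distribution $\pi(\cdot\mid q)$ on $\mathcal O$; $p_\pi(q)=\mathbb E_{o\sim\pi(\cdot\mid q)}[r^*(q,o)]$. $\mathrm{TV}(P,Q)=\sup_A|P(A)-Q(A)|$ is the total variation distance. *)

theory Defs
  imports "HOL-Probability.Probability"
begin

definition tv_dist :: "'o pmf \<Rightarrow> 'o pmf \<Rightarrow> real" where
  "tv_dist P Q = (SUP A. \<bar>measure_pmf.prob P A - measure_pmf.prob Q A\<bar>)"

definition succ_prob :: "('q \<Rightarrow> 'o \<Rightarrow> real) \<Rightarrow> ('q \<Rightarrow> 'o pmf) \<Rightarrow> 'q \<Rightarrow> real" where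
  "succ_prob r \<pi> q = measure_pmf.expectation (\<pi> q) (\<lambda>y. r q y)"

definition L_nat :: "('q \<Rightarrow> 'o \<Rightarrow> real) \<Rightarrow> ('q \<Rightarrow> 'o pmf) \<Rightarrow> ('q \<Rightarrow> real)
    \<Rightarrow> ('q \<Rightarrow> 'o pmf) \<Rightarrow> 'q \<Rightarrow> real" where
  "L_nat r \<pi>k M \<pi> q =
     measure_pmf.expectation (\<pi> q) (\<lambda>y. (r q y - measure_pmf.expectation (\<pi>k q) (\<lambda>y'. r q y')) / M q)"

end

theory Submission
  imports Defs
begin

lemma L1: fixes r :: "'q \<Rightarrow> 'o \<Rightarrow> real" and c :: real
  shows "L_nat r \<pi>k M \<pi> q = measure_pmf.expectation (\<pi> q) (\<lambda>y. r q y - succ_prob r \<pi>k q) / M q"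
  unfolding L_nat_def succ_prob_def by (rule integral_divide_zero)
lemma L2: "integrable (measure_pmf p) (indicator S :: 'o \<Rightarrow> real)"
  by (rule integrable_real_indicator) (simp_all add: measure_pmf.emeasure_finite less_top[symmetric])
lemma L3: fixes c :: real shows "measure_pmf.expectation p (\<lambda>y. indicator S y - c) = measure_pmf.prob p S - c"
  by (subst Bochner_Integration.integral_diff[OF L2 measure_pmf.integrable_const]) simp

lemma amgm: fixes u v :: real shows "2 * (u * v) \<le> u^2 + v^2"
proof -
  have "0 \<le> (u-v)^2" by simp
  thus ?thesis by (simp add: power2_diff)
qed
lemma amgm2: fixes u v l :: real assumes l: "l > 0" shows "u * v \<le> (l * u^2 + v^2/l)/2"
proof -
  have "2 * ((l * u) * v) \<le> (l * u)^2 + v^2" by (rule amgm)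
  hence "l  *  (2 * (u * v)) \<le> l  *  (l * u^2 + v^2/l)" using l
    by (simp add: power2_eq_square algebra_simps)
  hence "2 * (u * v) \<le> l * u^2 + v^2/l" using l by (simp only: mult_le_cancel_left_pos)
  thus ?thesis by simp
qed
lemma amgm3: fixes u v :: real assumes "0 \<le> u" "0 \<le> v" shows "norm (u * v) \<le> norm (u^2 + v^2)"
proof -
  have "2 * (u * v) \<le> u^2 + v^2" by (rule amgm)
  moreover have "0 \<le> u * v" using assms by simp
  ultimately show ?thesis by simp
qed

lemma aux: fixes x y z w :: real assumes "x - y = - z" "\<bar>z\<bar> \<le> w" shows "y - w \<le> x"
proof -
  have "z \<le> w" using assms(2) abs_le_D1 by blast
  thus ?thesis using assms(1) by simp
qed

lemma half: fixes I x :: real assumes "I \<le> x/2" "x \<le> I" shows "I \<le> 0"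
  using assms by linarith

lemma cs: fixes I A T :: real assumes "A \<ge> 0" "T \<ge> 0" "\<And>l. l > 0 \<Longrightarrow> I \<le> (l*A + T/l)/2"
 shows "I \<le> sqrt A * sqrt T"
proof (cases "A > 0 \<and> T > 0")
  case True
  define l where "l = sqrt T / sqrt A"
  have "l > 0" using True by (simp add: l_def)
  from assms(3)[OF this] have "I \<le> (l*A + T/l)/2" .
  have pA: "sqrt A > 0" "sqrt T > 0" using True by auto
  have sA: "sqrt A * sqrt A = A" "sqrt T * sqrt T = T" using True by auto
  have "l*A = sqrt A * sqrt T"
  proof -
    have "l*A = sqrt T / sqrt A * (sqrt A * sqrt A)" using sA by (simp add: l_def)
    also have "\<dots> = sqrt A * sqrt T" using pA by (simp add: field_simps)
    finally show ?thesis .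
  qed
  moreover have "T/l = sqrt A * sqrt T"
  proof -
    have "T/l = (sqrt T * sqrt T) / (sqrt T / sqrt A)" using sA by (simp add: l_def)
    also have "\<dots> = sqrt A * sqrt T" using pA by (simp add: field_simps)
    finally show ?thesis .
  qed
  ultimately have "I \<le> (sqrt A * sqrt T + sqrt A * sqrt T)/2" using \<open>I \<le> (l*A + T/l)/2\<close> by simp
  then show ?thesis by simp
next
  case False
  show ?thesis
  proof (rule ccontr)
    assume n: "\<not> ?thesis"
    have sq0: "0 \<le> sqrt A * sqrt T" using assms(1,2) by simp
    from n sq0 have I: "I > 0" by linarith
    show False
    proof (cases "A = 0")
      case True
      have lp: "0 < (T+1)/I" using I assms(2) by simp
      from assms(3)[OF lp] True have h: "I \<le> (T / ((T+1)/I))/2" by simp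
      have e: "T / ((T+1)/I) = (T*I)/(T+1)" using I assms(2) by (simp add: field_simps)
      have "T*I \<le> I*(T+1)" using I by (simp add: algebra_simps)
      hence b: "(T*I)/(T+1) \<le> I" using assms(2) by (simp add: divide_le_eq)
      from h have "I \<le> ((T*I)/(T+1))/2" unfolding e .
      from this b have "I \<le> 0" by (rule half)
      with I show False by simp
    next
      case F: False
      hence T: "T = 0" using False assms by auto
      have p: "0 < I/(A+1)" using I assms(1) by simp
      from assms(3)[OF p] T have h: "I \<le> (I/(A+1)*A)/2" by simp
      have "I*A \<le> I*(A+1)" using I by simp
      hence "I/(A+1)*A \<le> I" using assms(1) by (simp add: divide_le_eq)
      with h have "I \<le> 0" by (rule half)
      with I show False by simp
    qed
  qed
qed

theorem theorem5:
  fixes \<rho> :: "'q measure"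
    and r :: "'q \<Rightarrow> 'o::countable \<Rightarrow> real"
    and \<pi>k \<pi> :: "'q \<Rightarrow> 'o pmf"
    and M :: "'q \<Rightarrow> real"
  assumes "prob_space \<rho>"
    and "\<And>q y. r q y = 0 \<or> r q y = 1"
    and "\<And>q. M q > 0"
    and "(\<lambda>q. succ_prob r \<pi> q) \<in> borel_measurable \<rho>"
    and "(\<lambda>q. succ_prob r \<pi>k q) \<in> borel_measurable \<rho>"
    and "(\<lambda>q. tv_dist (\<pi> q) (\<pi>k q)) \<in> borel_measurable \<rho>"
    and "integrable \<rho> (\<lambda>q. L_nat r \<pi>k M \<pi> q)"
    and "integrable \<rho> (\<lambda>q. ((1 - M q) / M q)\<^sup>2)"
  shows "(\<integral>q. succ_prob r \<pi> q - succ_prob r \<pi>k q \<partial>\<rho>)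
         \<ge> (\<integral>q. L_nat r \<pi>k M \<pi> q \<partial>\<rho>)
           - 2 * sqrt (\<integral>q. ((1 - M q) / M q)\<^sup>2 \<partial>\<rho>)
               * sqrt (\<integral>q. (tv_dist (\<pi> q) (\<pi>k q))\<^sup>2 \<partial>\<rho>)"
proof -
  interpret P: prob_space \<rho> by (rule assms(1))
  define S where "S q = {y. r q y = 1}" for q
  have rS: "r q = indicator (S q)" for q
    using assms(2) by (auto simp: S_def indicator_def fun_eq_iff)
  define d where "d q = succ_prob r \<pi> q - succ_prob r \<pi>k q" for q
  define t where "t q = tv_dist (\<pi> q) (\<pi>k q)" for q
  define a where "a q = (1 - M q) / M q" for q
  have sp: "succ_prob r p q = measure_pmf.prob (p q) (S q)" for p q
    unfolding succ_prob_def rS by simp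
  have bdd: "bdd_above (range (\<lambda>A. \<bar>measure_pmf.prob (\<pi> q) A - measure_pmf.prob (\<pi>k q) A\<bar>))" for q
  proof (rule bdd_aboveI[where M=1])
    fix x assume "x \<in> range (\<lambda>A. \<bar>measure_pmf.prob (\<pi> q) A - measure_pmf.prob (\<pi>k q) A\<bar>)"
    then obtain A where "x = \<bar>measure_pmf.prob (\<pi> q) A - measure_pmf.prob (\<pi>k q) A\<bar>" by auto
    moreover have "measure_pmf.prob (\<pi> q) A \<le> 1" "measure_pmf.prob (\<pi>k q) A \<le> 1"
      "measure_pmf.prob (\<pi> q) A \<ge> 0" "measure_pmf.prob (\<pi>k q) A \<ge> 0" by auto
    ultimately show "x \<le> 1" by linarith
  qed
  have dt: "\<bar>d q\<bar> \<le> t q" for q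
  proof -
    have "\<bar>d q\<bar> = \<bar>measure_pmf.prob (\<pi> q) (S q) - measure_pmf.prob (\<pi>k q) (S q)\<bar>"
      unfolding d_def using sp[of \<pi> q] sp[of \<pi>k q] by simp
    also have "\<dots> \<le> t q" unfolding t_def tv_dist_def by (rule cSUP_upper[OF _ bdd]) simp
    finally show ?thesis .
  qed
  have t1: "t q \<le> 1" for q
    unfolding t_def tv_dist_def
  proof (rule cSUP_least)
    fix A
    have "measure_pmf.prob (\<pi> q) A \<le> 1" "measure_pmf.prob (\<pi>k q) A \<le> 1"
      "measure_pmf.prob (\<pi> q) A \<ge> 0" "measure_pmf.prob (\<pi>k q) A \<ge> 0" by auto
    thus "\<bar>measure_pmf.prob (\<pi> q) A - measure_pmf.prob (\<pi>k q) A\<bar> \<le> 1" by linarith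
  qed simp
  have t0: "0 \<le> t q" for q by (rule order_trans[OF abs_ge_zero dt])
  have Ld: "L_nat r \<pi>k M \<pi> q = d q / M q" for q
  proof -
    have e: "L_nat r \<pi>k M \<pi> q = measure_pmf.expectation (\<pi> q) (\<lambda>y. indicator (S q) y - succ_prob r \<pi>k q) / M q"
      using L1[of r \<pi>k M \<pi> q] unfolding rS[of q] .
    have d: "measure_pmf.prob (\<pi> q) (S q) - succ_prob r \<pi>k q = d q"
      unfolding d_def using sp[of \<pi> q] by simp
    from e show ?thesis by (simp only: L3 d)
  qed
  have pw: "d q \<ge> L_nat r \<pi>k M \<pi> q - \<bar>a q\<bar> * t q" for q
  proof -
    have M: "M q > 0" by (rule assms(3))
    have "d q - d q / M q = - (d q * a q)" using M by (simp add: a_def field_simps)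
    moreover have "\<bar>d q * a q\<bar> \<le> \<bar>a q\<bar> * t q"
      using mult_left_mono[OF dt[of q] abs_ge_zero[of "a q"]] by (simp add: abs_mult mult.commute)
    ultimately show ?thesis unfolding Ld by (rule aux)
  qed
  have dm: "d \<in> borel_measurable \<rho>" unfolding d_def by (rule borel_measurable_diff[OF assms(4) assms(5)])
  have tm: "t \<in> borel_measurable \<rho>" unfolding t_def by (rule assms(6))
  have a2m: "(\<lambda>q. (a q)\<^sup>2) \<in> borel_measurable \<rho>"
    using borel_measurable_integrable[OF assms(8)] unfolding a_def .
  have am: "(\<lambda>q. \<bar>a q\<bar>) \<in> borel_measurable \<rho>"
  proof -
    have "(\<lambda>q. sqrt ((a q)\<^sup>2)) \<in> borel_measurable \<rho>" using measurable_compose[OF a2m borel_measurable_sqrt] by (simp add: comp_def)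
    thus ?thesis by simp
  qed
  have di: "integrable \<rho> d"
  proof (rule P.integrable_const_bound[where B=1])
    show "AE x in \<rho>. norm (d x) \<le> 1" using order_trans[OF dt t1] by simp
  qed (rule dm)
  have t2i: "integrable \<rho> (\<lambda>q. (t q)\<^sup>2)"
  proof (rule P.integrable_const_bound[where B=1])
    show "AE x in \<rho>. norm ((t x)\<^sup>2) \<le> 1"
    proof (rule AE_I2)
      fix x show "norm ((t x)\<^sup>2) \<le> 1" using t0[of x] t1[of x] by (simp add: power_le_one)
    qed
  qed (rule borel_measurable_power[OF tm])
  have a2i: "integrable \<rho> (\<lambda>q. (a q)\<^sup>2)" using assms(8) unfolding a_def .
  have ati: "integrable \<rho> (\<lambda>q. \<bar>a q\<bar> * t q)"
  proof (rule Bochner_Integration.integrable_bound[OF Bochner_Integration.integrable_add[OF a2i t2i]])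
    show "(\<lambda>q. \<bar>a q\<bar> * t q) \<in> borel_measurable \<rho>" by (rule borel_measurable_times[OF am tm])
    show "AE x in \<rho>. norm (\<bar>a x\<bar> * t x) \<le> norm ((a x)\<^sup>2 + (t x)\<^sup>2)"
    proof (rule AE_I2)
      fix x
      show "norm (\<bar>a x\<bar> * t x) \<le> norm ((a x)\<^sup>2 + (t x)\<^sup>2)"
        using amgm3[OF abs_ge_zero[of "a x"] t0[of x]] by (simp only: power2_abs)
    qed
  qed
  define A where "A = (\<integral>q. (a q)\<^sup>2 \<partial>\<rho>)"
  define T where "T = (\<integral>q. (t q)\<^sup>2 \<partial>\<rho>)"
  define I where "I = (\<integral>q. \<bar>a q\<bar> * t q \<partial>\<rho>)"
  have A0: "A \<ge> 0" unfolding A_def by (rule integral_nonneg_AE) simp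
  have T0: "T \<ge> 0" unfolding T_def by (rule integral_nonneg_AE) simp
  have I_le: "I \<le> sqrt A * sqrt T"
  proof (rule cs[OF A0 T0])
    fix l :: real assume l: "l > 0"
    have i1: "integrable \<rho> (\<lambda>q. l * (a q)\<^sup>2)" by (rule integrable_mult_right[OF a2i])
    have i2: "integrable \<rho> (\<lambda>q. (t q)\<^sup>2 / l)" by (rule integrable_divide_zero[OF t2i])
    have i3: "integrable \<rho> (\<lambda>q. l * (a q)\<^sup>2 + (t q)\<^sup>2 / l)"
      by (rule Bochner_Integration.integrable_add[OF i1 i2])
    have i4: "integrable \<rho> (\<lambda>q. (l * (a q)\<^sup>2 + (t q)\<^sup>2 / l) / 2)"
      by (rule integrable_divide_zero[OF i3])
    have "I \<le> (\<integral>q. (l * (a q)\<^sup>2 + (t q)\<^sup>2 / l) / 2 \<partial>\<rho>)"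
      unfolding I_def
    proof (rule integral_mono[OF ati i4])
      fix q
      show "\<bar>a q\<bar> * t q \<le> (l * (a q)\<^sup>2 + (t q)\<^sup>2 / l) / 2"
        using amgm2[OF l, of "\<bar>a q\<bar>" "t q"] by (simp only: power2_abs)
    qed
    also have "\<dots> = (\<integral>q. l * (a q)\<^sup>2 + (t q)\<^sup>2 / l \<partial>\<rho>) / 2"
      by (rule integral_divide_zero)
    also have "(\<integral>q. l * (a q)\<^sup>2 + (t q)\<^sup>2 / l \<partial>\<rho>) = (\<integral>q. l * (a q)\<^sup>2 \<partial>\<rho>) + (\<integral>q. (t q)\<^sup>2 / l \<partial>\<rho>)"
      by (rule Bochner_Integration.integral_add[OF i1 i2])
    also have "(\<integral>q. l * (a q)\<^sup>2 \<partial>\<rho>) = l * A" unfolding A_def by (rule integral_mult_right_zero)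
    also have "(\<integral>q. (t q)\<^sup>2 / l \<partial>\<rho>) = T / l" unfolding T_def by (rule integral_divide_zero)
    finally show "I \<le> (l * A + T / l) / 2" .
  qed
  have "(\<integral>q. L_nat r \<pi>k M \<pi> q \<partial>\<rho>) - I = (\<integral>q. L_nat r \<pi>k M \<pi> q - \<bar>a q\<bar> * t q \<partial>\<rho>)"
    unfolding I_def by (rule Bochner_Integration.integral_diff[OF assms(7) ati, symmetric])
  also have "\<dots> \<le> (\<integral>q. d q \<partial>\<rho>)"
  proof (rule integral_mono[OF Bochner_Integration.integrable_diff[OF assms(7) ati] di])
    fix q show "L_nat r \<pi>k M \<pi> q - \<bar>a q\<bar> * t q \<le> d q" by (rule pw)
  qed
  finally have main: "(\<integral>q. L_nat r \<pi>k M \<pi> q \<partial>\<rho>) - I \<le> (\<integral>q. d q \<partial>\<rho>)" .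
  have "sqrt A * sqrt T \<ge> 0" using A0 T0 by simp
  hence "(\<integral>q. L_nat r \<pi>k M \<pi> q \<partial>\<rho>) - 2 * sqrt A * sqrt T \<le> (\<integral>q. d q \<partial>\<rho>)"
    using main I_le by linarith
  thus ?thesis unfolding A_def T_def a_def t_def d_def .
qed

end
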